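(* Let $\mathcal O\subset\mathbb R^2$ be a connected open set and let $\mathcal M=(\mathcal O,\Gamma)$ be an affine surface. Suppose there exist real linear functions $L_1,L_2,L_3$ such that $\{e^{L_1}\cos(L_2),e^{L_1}\sin(L_2),e^{L_3}\}$ is a basis of $\mathcal Q(\mathcal M)$. Then $\Gamma$ has constant Christoffel symbols (i.e. is Type $\mathcal A$), and $\Gamma$ is linearly equivalent to one of: $\Gamma_c^2(b_1,b_2)$ for some $b_1\neq1$ with $(b_1,b_2)\neq(0,0)$; $\Gamma_5^1(c)$ for some $c\in\mathbb R$; or $\Gamma_5^0$.
   Context: An affine manifold $(M,\nabla)$ is a smooth manifold $M$ of dimension $m\ge 2$ with a torsion-free connection $\nabla$ on $TM$; in local coordinates $\nabla_{\partial_{x^i}}\partial_{x^j}=\Gamma_{ij}^k\partial_{x^k}$ (summation over repeated indices). The curvature is $R(X,Y)Z=\nabla_X\nabla_YZ-\nabla_Y\nabla_XZ-\nabla_{[X,Y]}Z$, the Ricci tensor is $\rho(Y,Z)=\mathrm{Tr}(X\mapsto R(X,Y)Z)$, and $\rho_s(X,Y)=\frac12(\rho(X,Y)+\rho(Y,X))$. The Hessian is $\mathcal H_\nabla f=(\partial_{x^i}\partial_{x^j}f-\Gamma_{ij}^k\partial_{x^k}f)\,dx^i\otimes dx^j$. The quasi-Einstein solution space is $\mathcal Q(M,\nabla)=\{f\in C^\infty(M):\mathcal H_\nabla f+\frac{1}{m-1}f\rho_s=0\}$. For real constants, $\Gamma(a,b,c,d,e,f)$ denotes the connection on (an open subset of)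 $\mathbb R^2$ whose Christoffel symbols in the standard coordinates $(x^1,x^2)$ are the constants $\Gamma_{11}^1=a$, $\Gamma_{11}^2=b$, $\Gamma_{12}^1=\Gamma_{21}^1=c$, $\Gamma_{12}^2=\Gamma_{21}^2=d$, $\Gamma_{22}^1=e$, $\Gamma_{22}^2=f$. Two connections with constant Christoffel symbols are linearly equivalent if there is $T\in GL(2,\mathbb R)$ with $T^*\nabla_2=\nabla_1$. A real linear function is $L(x^1,x^2)=\alpha_1x^1+\alpha_2x^2$, $\alpha_i\in\mathbb R$. The specific connections: for $b_1\ne1$, $\Gamma_c^2(b_1,b_2):=\Gamma(1+b_1,0,b_2,1,\frac{1+b_2^2}{b_1-1},0)$; $\Gamma_5^1(c):=\Gamma(1,0,0,0,1+c^2,2c)$; $\Gamma_5^0:=\Gamma(1,0,0,1,-1,0)$. *)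

theory Defs
  imports "HOL-Analysis.Analysis"
begin

definition coord_idx :: "nat set" where "coord_idx = {1, 2}"

definition partial :: "nat \<Rightarrow> (real \<times> real \<Rightarrow> real) \<Rightarrow> real \<times> real \<Rightarrow> real" where
  "partial i f p =
     (if i = 1 then deriv (\<lambda>t. f (t, snd p)) (fst p) else deriv (\<lambda>t. f (fst p, t)) (snd p))"

definition smooth2_on :: "(real \<times> real) set \<Rightarrow> (real \<times> real \<Rightarrow> real) \<Rightarrow> bool" where
  "smooth2_on U f \<longleftrightarrow> (\<forall>ds. set ds \<subseteq> coord_idx \<longrightarrow> foldr partial ds f differentiable_on U)"

text \<open>A connection is given by Christoffel symbols G i j k = Gamma_ij^k (functions on R^2).
  Affine surface: smooth symbols, torsion free (symmetric in i j).\<close>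
definition affine_surface ::
  "(real \<times> real) set \<Rightarrow> (nat \<Rightarrow> nat \<Rightarrow> nat \<Rightarrow> real \<times> real \<Rightarrow> real) \<Rightarrow> bool" where
  "affine_surface U G \<longleftrightarrow> open U \<and>
     (\<forall>i\<in>coord_idx. \<forall>j\<in>coord_idx. \<forall>k\<in>coord_idx.
        smooth2_on U (G i j k) \<and> (\<forall>p\<in>U. G i j k p = G j i k p))"

text \<open>R(d_i,d_j) d_k = curv G i j k m d_m\<close>
definition curv :: "(nat \<Rightarrow> nat \<Rightarrow> nat \<Rightarrow> real \<times> real \<Rightarrow> real) \<Rightarrow> nat \<Rightarrow> nat \<Rightarrow> nat \<Rightarrow> nat
    \<Rightarrow> real \<times> real \<Rightarrow> real" where
  "curv G i j k m p = partial i (G j k m) p - partial j (G i k m) p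
     + (\<Sum>l\<in>coord_idx. G j k l p * G i l m p - G i k l p * G j l m p)"

definition ricci :: "(nat \<Rightarrow> nat \<Rightarrow> nat \<Rightarrow> real \<times> real \<Rightarrow> real) \<Rightarrow> nat \<Rightarrow> nat \<Rightarrow> real \<times> real \<Rightarrow> real" where
  "ricci G j k p = (\<Sum>i\<in>coord_idx. curv G i j k i p)"

definition ricci_s :: "(nat \<Rightarrow> nat \<Rightarrow> nat \<Rightarrow> real \<times> real \<Rightarrow> real) \<Rightarrow> nat \<Rightarrow> nat \<Rightarrow> real \<times> real \<Rightarrow> real" where
  "ricci_s G j k p = (ricci G j k p + ricci G k j p) / 2"

definition hess :: "(nat \<Rightarrow> nat \<Rightarrow> nat \<Rightarrow> real \<times> real \<Rightarrow> real) \<Rightarrow> (real \<times> real \<Rightarrow> real)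
    \<Rightarrow> nat \<Rightarrow> nat \<Rightarrow> real \<times> real \<Rightarrow> real" where
  "hess G f i j p = partial i (partial j f) p - (\<Sum>k\<in>coord_idx. G i j k p * partial k f p)"

text \<open>Quasi-Einstein solution space, m = 2 so 1/(m-1) = 1.\<close>
definition QE :: "(real \<times> real) set \<Rightarrow> (nat \<Rightarrow> nat \<Rightarrow> nat \<Rightarrow> real \<times> real \<Rightarrow> real)
    \<Rightarrow> (real \<times> real \<Rightarrow> real) set" where
  "QE U G = {f. smooth2_on U f \<and>
     (\<forall>p\<in>U. \<forall>i\<in>coord_idx. \<forall>j\<in>coord_idx.
        hess G f i j p + (1 / (2 - 1)) * f p * ricci_s G i j p = 0)}"

definition is_basis3_on :: "(real \<times> real) set \<Rightarrow> (real \<times> real \<Rightarrow> real) set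
    \<Rightarrow> (real \<times> real \<Rightarrow> real) \<Rightarrow> (real \<times> real \<Rightarrow> real) \<Rightarrow> (real \<times> real \<Rightarrow> real) \<Rightarrow> bool" where
  "is_basis3_on U Q f1 f2 f3 \<longleftrightarrow>
     f1 \<in> Q \<and> f2 \<in> Q \<and> f3 \<in> Q \<and>
     (\<forall>a b c. (\<forall>p\<in>U. a * f1 p + b * f2 p + c * f3 p = 0) \<longrightarrow> a = 0 \<and> b = 0 \<and> c = 0) \<and>
     (\<forall>g\<in>Q. \<exists>a b c. \<forall>p\<in>U. g p = a * f1 p + b * f2 p + c * f3 p)"

definition real_linear_fun :: "(real \<times> real \<Rightarrow> real) \<Rightarrow> bool" where
  "real_linear_fun L \<longleftrightarrow> (\<exists>\<alpha>1 \<alpha>2. \<forall>x1 x2. L (x1, x2) = \<alpha>1 * x1 + \<alpha>2 * x2)"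

definition Gam :: "real \<Rightarrow> real \<Rightarrow> real \<Rightarrow> real \<Rightarrow> real \<Rightarrow> real \<Rightarrow> nat \<Rightarrow> nat \<Rightarrow> nat \<Rightarrow> real" where
  "Gam a b c d e f i j k =
     (if i = 1 \<and> j = 1 then (if k = 1 then a else b)
      else if i = 2 \<and> j = 2 then (if k = 1 then e else f)
      else (if k = 1 then c else d))"

definition Gamma_c2 :: "real \<Rightarrow> real \<Rightarrow> nat \<Rightarrow> nat \<Rightarrow> nat \<Rightarrow> real" where
  "Gamma_c2 b1 b2 = Gam (1 + b1) 0 b2 1 ((1 + b2\<^sup>2) / (b1 - 1)) 0"

definition Gamma_5_1 :: "real \<Rightarrow> nat \<Rightarrow> nat \<Rightarrow> nat \<Rightarrow> real" where
  "Gamma_5_1 c = Gam 1 0 0 0 (1 + c\<^sup>2) (2 * c)"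

definition Gamma_5_0 :: "nat \<Rightarrow> nat \<Rightarrow> nat \<Rightarrow> real" where
  "Gamma_5_0 = Gam 1 0 0 1 (-1) 0"

text \<open>Linear equivalence of constant connections: T in GL(2,R) (x = T y) with
  T^* nabla_2 = nabla_1, i.e. Gamma1_ab^c = (T^-1)^c_k Gamma2_ij^k T^i_a T^j_b,
  written multiplied through by T.\<close>
definition lin_equiv :: "(nat \<Rightarrow> nat \<Rightarrow> nat \<Rightarrow> real) \<Rightarrow> (nat \<Rightarrow> nat \<Rightarrow> nat \<Rightarrow> real) \<Rightarrow> bool" where
  "lin_equiv C1 C2 \<longleftrightarrow> (\<exists>T :: nat \<Rightarrow> nat \<Rightarrow> real.
     T 1 1 * T 2 2 - T 1 2 * T 2 1 \<noteq> 0 \<and>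
     (\<forall>a\<in>coord_idx. \<forall>b\<in>coord_idx. \<forall>k\<in>coord_idx.
        (\<Sum>c\<in>coord_idx. T k c * C1 a b c) =
        (\<Sum>i\<in>coord_idx. \<Sum>j\<in>coord_idx. T i a * T j b * C2 i j k)))"

end

theory Submission
  imports Defs
begin

definition sel :: "real \<Rightarrow> real \<Rightarrow> nat \<Rightarrow> real" where
  "sel x y i = (if i = 1 then x else y)"

definition EC :: "real\<Rightarrow>real\<Rightarrow>real\<Rightarrow>real\<Rightarrow>real\<Rightarrow>real\<Rightarrow>real\<times>real\<Rightarrow>real" where
  "EC a1 a2 b1 b2 c d q = exp (a1 * fst q + a2 * snd q) *
     (c* cos (b1 * fst q + b2 * snd q) + d* sin (b1 * fst q + b2 * snd q))"

lemma partial_EC: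
  "partial i (EC a1 a2 b1 b2 c d) =
   EC a1 a2 b1 b2 (sel a1 a2 i * c + sel b1 b2 i * d) (sel a1 a2 i * d - sel b1 b2 i * c)"
proof (rule ext)
  fix q :: "real \<times> real"
  obtain x y where q: "q = (x, y)" by (cases q)
  show "partial i (EC a1 a2 b1 b2 c d) q = EC a1 a2 b1 b2 (sel a1 a2 i * c + sel b1 b2 i * d) (sel a1 a2 i * d - sel b1 b2 i * c) q"
  proof (cases "i = 1")
    case True
    have "((\<lambda>t. EC a1 a2 b1 b2 c d (t, y)) has_real_derivative
       exp (a1 * x + a2 * y) * (a1 * (c* cos (b1 * x + b2 * y) + d* sin (b1 * x + b2 * y))
        + (c * (- sin (b1 * x + b2 * y) * b1) + d * (cos (b1 * x + b2 * y) * b1)))) (at x)"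
      unfolding EC_def fst_conv snd_conv
      by (auto intro!: derivative_eq_intros simp: algebra_simps)
    then show ?thesis using True
      by (simp add: partial_def q DERIV_imp_deriv EC_def sel_def algebra_simps)
  next
    case False
    have "((\<lambda>t. EC a1 a2 b1 b2 c d (x, t)) has_real_derivative
       exp (a1 * x + a2 * y) * (a2 * (c* cos (b1 * x + b2 * y) + d* sin (b1 * x + b2 * y))
        + (c * (- sin (b1 * x + b2 * y) * b2) + d * (cos (b1 * x + b2 * y) * b2)))) (at y)"
      unfolding EC_def fst_conv snd_conv
      by (auto intro!: derivative_eq_intros simp: algebra_simps)
    then show ?thesis using False
      by (simp add: partial_def q DERIV_imp_deriv EC_def sel_def algebra_simps)
  qed
qed

lemma cramer:
  fixes x y b1 b2 g1 g2 B X :: real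
  assumes D: "b1 * g2 - b2 * g1 \<noteq> 0" and e1: "x * b1 + y * b2 = B" and e2: "x * g1 + y * g2 = X"
  shows "x = (B * g2 - b2 * X) / (b1 * g2 - b2 * g1)" "y = (b1 * X - g1 * B) / (b1 * g2 - b2 * g1)"
proof -
  have "x * (b1 * g2 - b2 * g1) = B * g2 - b2 * X" using e1 e2 by (auto simp: algebra_simps)
  then show "x = (B * g2 - b2 * X) / (b1 * g2 - b2 * g1)" using D by (simp add: field_simps)
  have "y * (b1 * g2 - b2 * g1) = b1 * X - g1 * B" using e1 e2 by (auto simp: algebra_simps)
  then show "y = (b1 * X - g1 * B) / (b1 * g2 - b2 * g1)" using D by (simp add: field_simps)
qed

definition Bf where "Bf a1 a2 b1 b2 i j = sel a1 a2 i * sel b1 b2 j + sel a1 a2 j * sel b1 b2 i"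
definition Xf where "Xf a1 a2 b1 b2 m1 m2 i j = sel m1 m2 i * sel m1 m2 j - sel a1 a2 i * sel a1 a2 j + sel b1 b2 i * sel b1 b2 j"

lemma lin_c2:
  fixes C :: "nat \<Rightarrow> nat \<Rightarrow> nat \<Rightarrow> real"
  assumes D: "b1 * (m2 - a2) - b2 * (m1 - a1) \<noteq> 0" and dt: "a1 * b2 - a2 * b1 \<noteq> 0"
    and m1: "m1 = s * a1 + t * b1" and m2: "m2 = s * a2 + t * b2"
    and eqs: "\<And>a b. a \<in> coord_idx \<Longrightarrow> b \<in> coord_idx \<Longrightarrow>
       C a b 1 * b1 + C a b 2 * b2 = Bf a1 a2 b1 b2 a b \<and>
       C a b 1 * (m1 - a1) + C a b 2 * (m2 - a2) = Xf a1 a2 b1 b2 m1 m2 a b"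
  shows "lin_equiv C (Gamma_c2 s t)"
proof -
  have s1: "s - 1 \<noteq> 0" using D unfolding m1 m2 by (auto simp: algebra_simps)
  have cr: "C a b 1 = (Bf a1 a2 b1 b2 a b * (m2 - a2) - b2 * Xf a1 a2 b1 b2 m1 m2 a b) / (b1 * (m2 - a2) - b2 * (m1 - a1))"
      "C a b 2 = (b1 * Xf a1 a2 b1 b2 m1 m2 a b - (m1 - a1) * Bf a1 a2 b1 b2 a b) / (b1 * (m2 - a2) - b2 * (m1 - a1))"
    if "a \<in> coord_idx" "b \<in> coord_idx" for a b
    using cramer[OF D, of "C a b 1" "C a b 2"] eqs[OF that] by auto
  have Df: "b1 * (m2 - a2) - b2 * (m1 - a1) = (s - 1) * (a2 * b1 - a1 * b2)" unfolding m1 m2 by (simp add: algebra_simps)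
  have dt': "a2 * b1 - a1 * b2 \<noteq> 0" using dt by (simp add: algebra_simps)
  have c1: "1 \<in> coord_idx" "2 \<in> coord_idx" by (auto simp: coord_idx_def)
  note crs = cr[OF c1(1) c1(1)] cr[OF c1(1) c1(2)] cr[OF c1(2) c1(1)] cr[OF c1(2) c1(2)]
  obtain dd where ddef: "dd = (s - 1) * (a2 * b1 - a1 * b2)" by blast
  have dd0: "dd \<noteq> 0" using ddef s1 dt' by simp
  note crs' = crs[unfolded Df, folded ddef]
  let ?T = "\<lambda>k c. if k = 1 then sel a1 a2 c else sel b1 b2 c"
  show ?thesis unfolding lin_equiv_def
    apply (rule exI[of _ ?T])
    using dt dt' s1 dd0 unfolding coord_idx_def
    apply (simp add: crs' crs'[unfolded One_nat_def] Bf_def Xf_def sel_def m1 m2 Gamma_c2_def Gam_def)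
    apply (simp add: field_simps)
    apply (simp add: ddef algebra_simps power2_eq_square)
    done
qed

lemma lin_51:
  fixes C :: "nat \<Rightarrow> nat \<Rightarrow> nat \<Rightarrow> real"
  assumes D: "b1 * (m2 - a2) - b2 * (m1 - a1) \<noteq> 0"
    and a1: "a1 = c * b1" and a2: "a2 = c * b2"
    and eqs: "\<And>a b. a \<in> coord_idx \<Longrightarrow> b \<in> coord_idx \<Longrightarrow>
       C a b 1 * b1 + C a b 2 * b2 = Bf a1 a2 b1 b2 a b \<and>
       C a b 1 * (m1 - a1) + C a b 2 * (m2 - a2) = Xf a1 a2 b1 b2 m1 m2 a b"
  shows "lin_equiv C (Gamma_5_1 c)"
proof -
  have cr: "C a b 1 = (Bf a1 a2 b1 b2 a b * (m2 - a2) - b2 * Xf a1 a2 b1 b2 m1 m2 a b) / (b1 * (m2 - a2) - b2 * (m1 - a1))"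
      "C a b 2 = (b1 * Xf a1 a2 b1 b2 m1 m2 a b - (m1 - a1) * Bf a1 a2 b1 b2 a b) / (b1 * (m2 - a2) - b2 * (m1 - a1))"
    if "a \<in> coord_idx" "b \<in> coord_idx" for a b
    using cramer[OF D, of "C a b 1" "C a b 2"] eqs[OF that] by auto
  have Df: "b1 * (m2 - a2) - b2 * (m1 - a1) = b1 * m2 - b2 * m1" unfolding a1 a2 by (simp add: algebra_simps)
  have c1: "1 \<in> coord_idx" "2 \<in> coord_idx" by (auto simp: coord_idx_def)
  note crs = cr[OF c1(1) c1(1)] cr[OF c1(1) c1(2)] cr[OF c1(2) c1(1)] cr[OF c1(2) c1(2)]
  obtain dd where ddef: "dd = b1 * m2 - b2 * m1" by blast
  have dd0: "dd \<noteq> 0" using ddef D Df by simp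
  have dt: "m1 * b2 - m2 * b1 \<noteq> 0" using dd0 ddef by (simp add: algebra_simps)
  note crs' = crs[unfolded Df, folded ddef]
  let ?T = "\<lambda>k i. if k = 1 then sel m1 m2 i else sel b1 b2 i"
  show ?thesis unfolding lin_equiv_def
    apply (rule exI[of _ ?T])
    using dt dd0 unfolding coord_idx_def
    apply (simp add: crs' crs'[unfolded One_nat_def] Bf_def Xf_def sel_def a1 a2 Gamma_5_1_def Gam_def)
    apply (simp add: field_simps)
    apply (simp add: ddef algebra_simps power2_eq_square)
    done
qed

lemma lin_50:
  fixes C :: "nat \<Rightarrow> nat \<Rightarrow> nat \<Rightarrow> real"
  assumes D: "b1 * (m2 - a2) - b2 * (m1 - a1) \<noteq> 0" and dt: "a1 * b2 - a2 * b1 \<noteq> 0"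
    and m1: "m1 = 0" and m2: "m2 = 0"
    and eqs: "\<And>a b. a \<in> coord_idx \<Longrightarrow> b \<in> coord_idx \<Longrightarrow>
       C a b 1 * b1 + C a b 2 * b2 = Bf a1 a2 b1 b2 a b \<and>
       C a b 1 * (m1 - a1) + C a b 2 * (m2 - a2) = Xf a1 a2 b1 b2 m1 m2 a b"
  shows "lin_equiv C Gamma_5_0"
proof -
  have "lin_equiv C (Gamma_c2 0 0)"
    by (rule lin_c2[OF D dt _ _ eqs]) (auto simp: m1 m2)
  moreover have "Gamma_c2 0 0 = Gamma_5_0" unfolding Gamma_c2_def Gamma_5_0_def by simp
  ultimately show ?thesis by simp
qed

lemma QE_EC:
  assumes "hess G (EC a1 a2 b1 b2 c d) i j p + 1 / (2 - 1) * EC a1 a2 b1 b2 c d p * R = 0"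
  shows "(sel a1 a2 i * (sel a1 a2 j * c + sel b1 b2 j * d) + sel b1 b2 i * (sel a1 a2 j * d - sel b1 b2 j * c)) * cos (b1 * fst p + b2 * snd p)
   + (sel a1 a2 i * (sel a1 a2 j * d - sel b1 b2 j * c) - sel b1 b2 i * (sel a1 a2 j * c + sel b1 b2 j * d)) * sin (b1 * fst p + b2 * snd p)
   - G i j 1 p * ((a1 * c + b1 * d) * cos (b1 * fst p + b2 * snd p) + (a1 * d - b1 * c) * sin (b1 * fst p + b2 * snd p))
   - G i j 2 p * ((a2 * c + b2 * d) * cos (b1 * fst p + b2 * snd p) + (a2 * d - b2 * c) * sin (b1 * fst p + b2 * snd p))
   + R * (c * cos (b1 * fst p + b2 * snd p) + d * sin (b1 * fst p + b2 * snd p)) = 0" (is "?L = 0")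
proof -
  have "exp (a1 * fst p + a2 * snd p) * ?L =
        hess G (EC a1 a2 b1 b2 c d) i j p + 1 / (2 - 1) * EC a1 a2 b1 b2 c d p * R"
    unfolding hess_def partial_EC
    by (simp add: EC_def coord_idx_def sel_def algebra_simps)
  with assms show ?thesis by simp
qed

lemma combine:
  fixes ai aj bi bj a1 a2 b1 b2 G1 G2 R x :: real
  assumes e1: "(ai * (aj * 1 + bj * 0) + bi * (aj * 0 - bj * 1)) * cos x
   + (ai * (aj * 0 - bj * 1) - bi * (aj * 1 + bj * 0)) * sin x
   - G1 * ((a1 * 1 + b1 * 0) * cos x + (a1 * 0 - b1 * 1) * sin x)
   - G2 * ((a2 * 1 + b2 * 0) * cos x + (a2 * 0 - b2 * 1) * sin x)
   + R * (1 * cos x + 0 * sin x) = 0"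
  and e2: "(ai * (aj * 0 + bj * 1) + bi * (aj * 1 - bj * 0)) * cos x
   + (ai * (aj * 1 - bj * 0) - bi * (aj * 0 + bj * 1)) * sin x
   - G1 * ((a1 * 0 + b1 * 1) * cos x + (a1 * 1 - b1 * 0) * sin x)
   - G2 * ((a2 * 0 + b2 * 1) * cos x + (a2 * 1 - b2 * 0) * sin x)
   + R * (0 * cos x + 1 * sin x) = 0"
  shows "ai * aj - bi * bj - G1 * a1 - G2 * a2 + R = 0" "G1 * b1 + G2 * b2 = ai * bj + aj * bi"
proof -
  have sc: "(sin x)^2 + (cos x)^2 = 1" by simp
  show "ai * aj - bi * bj - G1 * a1 - G2 * a2 + R = 0" using e1 e2 sc by algebra
  show "G1 * b1 + G2 * b2 = ai * bj + aj * bi" using e1 e2 sc by algebra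
qed

lemma Dnz:
  fixes a1 a2 b1 b2 m1 m2 G1 G2 H1 H2 :: real
  assumes nz: "b1 \<noteq> 0 \<or> b2 \<noteq> 0"
    and e1: "G1 * b1 + G2 * b2 = a1 * b1 + a1 * b1"
    and x1: "G1 * (m1 - a1) + G2 * (m2 - a2) = m1 * m1 - a1 * a1 + b1 * b1"
    and e2: "H1 * b1 + H2 * b2 = a2 * b2 + a2 * b2"
    and x2: "H1 * (m1 - a1) + H2 * (m2 - a2) = m2 * m2 - a2 * a2 + b2 * b2"
  shows "b1 * (m2 - a2) - b2 * (m1 - a1) \<noteq> 0"
proof
  assume D: "b1 * (m2 - a2) - b2 * (m1 - a1) = 0"
  show False
  proof (cases "b1 = 0")
    case False
    have "b1 * (G1 * (m1 - a1) + G2 * (m2 - a2)) - (m1 - a1) * (G1 * b1 + G2 * b2) = G2 * (b1 * (m2 - a2) - b2 * (m1 - a1))"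
      by (simp add: algebra_simps)
    then have "b1 * (G1 * (m1 - a1) + G2 * (m2 - a2)) = (m1 - a1) * (G1 * b1 + G2 * b2)"
      using D by simp
    then have "b1 * (m1 * m1 - a1 * a1 + b1 * b1) = (m1 - a1) * (a1 * b1 + a1 * b1)"
      using e1 x1 by simp
    then have "b1 * ((m1 - a1)^2 + b1^2) = 0" by (simp add: algebra_simps power2_eq_square)
    moreover have "(m1 - a1)^2 + b1^2 > 0" using False by (simp add: add_nonneg_pos)
    ultimately show False using False by simp
  next
    case True
    then have b2: "b2 \<noteq> 0" using nz by simp
    have "b2 * (H1 * (m1 - a1) + H2 * (m2 - a2)) - (m2 - a2) * (H1 * b1 + H2 * b2) = - H1 * (b1 * (m2 - a2) - b2 * (m1 - a1))"
      by (simp add: algebra_simps)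
    then have "b2 * (H1 * (m1 - a1) + H2 * (m2 - a2)) = (m2 - a2) * (H1 * b1 + H2 * b2)"
      using D by simp
    then have "b2 * (m2 * m2 - a2 * a2 + b2 * b2) = (m2 - a2) * (a2 * b2 + a2 * b2)"
      using e2 x2 by simp
    then have "b2 * ((m2 - a2)^2 + b2^2) = 0" by (simp add: algebra_simps power2_eq_square)
    moreover have "(m2 - a2)^2 + b2^2 > 0" using b2 by (simp add: add_nonneg_pos)
    ultimately show False using b2 by simp
  qed
qed

lemma lin_fun_eq:
  assumes "real_linear_fun L"
  obtains x y where "L = (\<lambda>q. x * fst q + y * snd q)"
proof -
  from assms obtain x y where h: "\<forall>x1 x2. L (x1, x2) = x * x1 + y * x2"
    unfolding real_linear_fun_def by blast
  have "L = (\<lambda>q. x * fst q + y * snd q)"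
    by (rule ext) (metis h prod.collapse)
  then show ?thesis using that by blast
qed

lemma key:
  assumes h1: "EC a1 a2 b1 b2 1 0 \<in> QE U G" and h2: "EC a1 a2 b1 b2 0 1 \<in> QE U G"
    and h3: "EC m1 m2 0 0 1 0 \<in> QE U G"
    and p: "p \<in> U" and i: "i \<in> coord_idx" and j: "j \<in> coord_idx"
  shows "G i j 1 p * b1 + G i j 2 p * b2 = Bf a1 a2 b1 b2 i j \<and>
         G i j 1 p * (m1 - a1) + G i j 2 p * (m2 - a2) = Xf a1 a2 b1 b2 m1 m2 i j"
proof -
  let ?R = "ricci_s G i j p"
  have q1: "hess G (EC a1 a2 b1 b2 1 0) i j p + 1 / (2 - 1) * EC a1 a2 b1 b2 1 0 p * ?R = 0"
    using h1 p i j unfolding QE_def by blast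
  have q2: "hess G (EC a1 a2 b1 b2 0 1) i j p + 1 / (2 - 1) * EC a1 a2 b1 b2 0 1 p * ?R = 0"
    using h2 p i j unfolding QE_def by blast
  have q3: "hess G (EC m1 m2 0 0 1 0) i j p + 1 / (2 - 1) * EC m1 m2 0 0 1 0 p * ?R = 0"
    using h3 p i j unfolding QE_def by blast
  have s0: "sel 0 0 j = 0" "sel 0 0 i = 0" by (simp_all add: sel_def)
  note c = combine[OF QE_EC[OF q1] QE_EC[OF q2]]
  have e3: "sel m1 m2 i * sel m1 m2 j - G i j 1 p * m1 - G i j 2 p * m2 + ?R = 0"
    using QE_EC[OF q3] by (simp add: s0 algebra_simps)
  show ?thesis using c e3 unfolding Bf_def Xf_def right_diff_distrib by linarith
qed


theorem theorem2p7:
  fixes U :: "(real \<times> real) set"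
    and G :: "nat \<Rightarrow> nat \<Rightarrow> nat \<Rightarrow> real \<times> real \<Rightarrow> real"
    and L1 L2 L3 :: "real \<times> real \<Rightarrow> real"
  assumes "open U" and "connected U"
    and "affine_surface U G"
    and "real_linear_fun L1" and "real_linear_fun L2" and "real_linear_fun L3"
    and "is_basis3_on U (QE U G) (\<lambda>p. exp (L1 p) * cos (L2 p)) (\<lambda>p. exp (L1 p) * sin (L2 p))
           (\<lambda>p. exp (L3 p))"
  shows "\<exists>C :: nat \<Rightarrow> nat \<Rightarrow> nat \<Rightarrow> real.
           (\<forall>i\<in>coord_idx. \<forall>j\<in>coord_idx. \<forall>k\<in>coord_idx. \<forall>p\<in>U. G i j k p = C i j k) \<and>
           ((\<exists>b1 b2. b1 \<noteq> 1 \<and> (b1, b2) \<noteq> (0, 0) \<and> lin_equiv C (Gamma_c2 b1 b2)) \<or>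
            (\<exists>c. lin_equiv C (Gamma_5_1 c)) \<or>
            lin_equiv C Gamma_5_0)"
proof -
  obtain a1 a2 where La: "L1 = (\<lambda>q. a1 * fst q + a2 * snd q)" using lin_fun_eq[OF assms(4)] by blast
  obtain b1 b2 where Lb: "L2 = (\<lambda>q. b1 * fst q + b2 * snd q)" using lin_fun_eq[OF assms(5)] by blast
  obtain m1 m2 where Lm: "L3 = (\<lambda>q. m1 * fst q + m2 * snd q)" using lin_fun_eq[OF assms(6)] by blast
  have f1: "(\<lambda>p. exp (L1 p) * cos (L2 p)) = EC a1 a2 b1 b2 1 0"
    by (rule ext) (simp add: La Lb EC_def)
  have f2: "(\<lambda>p. exp (L1 p) * sin (L2 p)) = EC a1 a2 b1 b2 0 1"
    by (rule ext) (simp add: La Lb EC_def)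
  have f3: "(\<lambda>p. exp (L3 p)) = EC m1 m2 0 0 1 0"
    by (rule ext) (simp add: Lm EC_def)
  have hb: "is_basis3_on U (QE U G) (EC a1 a2 b1 b2 1 0) (EC a1 a2 b1 b2 0 1) (EC m1 m2 0 0 1 0)"
    using assms(7) unfolding f1 f2 f3 .
  have h1: "EC a1 a2 b1 b2 1 0 \<in> QE U G" and h2: "EC a1 a2 b1 b2 0 1 \<in> QE U G"
    and h3: "EC m1 m2 0 0 1 0 \<in> QE U G" using hb unfolding is_basis3_on_def by auto
  have ind: "\<And>a b c. (\<forall>p\<in>U. a * EC a1 a2 b1 b2 1 0 p + b * EC a1 a2 b1 b2 0 1 p + c * EC m1 m2 0 0 1 0 p = 0)
      \<Longrightarrow> a = 0 \<and> b = 0 \<and> c = 0"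
    using hb unfolding is_basis3_on_def by blast
  have "U \<noteq> {}"
  proof
    assume "U = {}"
    then show False using ind[of 1 0 0] by simp
  qed
  then obtain p0 where p0: "p0 \<in> U" by blast
  have bnz: "b1 \<noteq> 0 \<or> b2 \<noteq> 0"
  proof (rule ccontr)
    assume "\<not> (b1 \<noteq> 0 \<or> b2 \<noteq> 0)"
    then have "\<forall>p\<in>U. 0 * EC a1 a2 b1 b2 1 0 p + 1 * EC a1 a2 b1 b2 0 1 p + 0 * EC m1 m2 0 0 1 0 p = 0"
      by (simp add: EC_def)
    then show False using ind[of 0 1 0] by simp
  qed
  have c1: "(1::nat) \<in> coord_idx" "(2::nat) \<in> coord_idx" by (auto simp: coord_idx_def)
  note K = key[OF h1 h2 h3]
  have k11: "G 1 1 1 p0 * b1 + G 1 1 2 p0 * b2 = a1 * b1 + a1 * b1"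
    "G 1 1 1 p0 * (m1 - a1) + G 1 1 2 p0 * (m2 - a2) = m1 * m1 - a1 * a1 + b1 * b1"
    using K[OF p0 c1(1) c1(1)] unfolding Bf_def Xf_def sel_def by simp_all
  have k22: "G 2 2 1 p0 * b1 + G 2 2 2 p0 * b2 = a2 * b2 + a2 * b2"
    "G 2 2 1 p0 * (m1 - a1) + G 2 2 2 p0 * (m2 - a2) = m2 * m2 - a2 * a2 + b2 * b2"
    using K[OF p0 c1(2) c1(2)] unfolding Bf_def Xf_def sel_def by simp_all
  have D: "b1 * (m2 - a2) - b2 * (m1 - a1) \<noteq> 0"
    by (rule Dnz[OF bnz k11 k22])
  define C where "C i j k = G i j k p0" for i j k
  have const: "\<forall>i\<in>coord_idx. \<forall>j\<in>coord_idx. \<forall>k\<in>coord_idx. \<forall>p\<in>U. G i j k p = C i j k"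
  proof (intro ballI)
    fix i j k p assume i: "i \<in> coord_idx" and j: "j \<in> coord_idx" and k: "k \<in> coord_idx" and p: "p \<in> U"
    note a = cramer[OF D, of "G i j 1 p" "G i j 2 p"] K[OF p i j]
    note b = cramer[OF D, of "G i j 1 p0" "G i j 2 p0"] K[OF p0 i j]
    have "G i j 1 p = G i j 1 p0" "G i j 2 p = G i j 2 p0" using a b by auto
    then show "G i j k p = C i j k" using k unfolding C_def coord_idx_def by auto
  qed
  have eqs: "\<And>a b. a \<in> coord_idx \<Longrightarrow> b \<in> coord_idx \<Longrightarrow>
       C a b 1 * b1 + C a b 2 * b2 = Bf a1 a2 b1 b2 a b \<and>
       C a b 1 * (m1 - a1) + C a b 2 * (m2 - a2) = Xf a1 a2 b1 b2 m1 m2 a b"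
    unfolding C_def using K[OF p0] by blast
  have "(\<exists>b1 b2. b1 \<noteq> 1 \<and> (b1, b2) \<noteq> (0, 0) \<and> lin_equiv C (Gamma_c2 b1 b2)) \<or>
            (\<exists>c. lin_equiv C (Gamma_5_1 c)) \<or> lin_equiv C Gamma_5_0"
  proof (cases "a1 * b2 - a2 * b1 = 0")
    case False
    show ?thesis
    proof (cases "m1 = 0 \<and> m2 = 0")
      case True
      then show ?thesis using lin_50[OF D False _ _ eqs] by blast
    next
      case mnz: False
      obtain d where ddef: "d = a1 * b2 - a2 * b1" by blast
      have d0: "d \<noteq> 0" using False ddef by simp
      define s where "s = (m1 * b2 - m2 * b1) / d"
      define t where "t = (a1 * m2 - a2 * m1) / d"
      have "m1 * d = (m1 * b2 - m2 * b1) * a1 + (a1 * m2 - a2 * m1) * b1" unfolding ddef by (simp add: algebra_simps)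
      then have m1: "m1 = s * a1 + t * b1"
      proof -
        assume e: "m1 * d = (m1 * b2 - m2 * b1) * a1 + (a1 * m2 - a2 * m1) * b1"
        have "s * a1 + t * b1 = ((m1 * b2 - m2 * b1) * a1 + (a1 * m2 - a2 * m1) * b1) / d"
          unfolding s_def t_def by (simp add: add_divide_distrib)
        also have "\<dots> = m1" unfolding e[symmetric] using d0 by simp
        finally show ?thesis by simp
      qed
      have "m2 * d = (m1 * b2 - m2 * b1) * a2 + (a1 * m2 - a2 * m1) * b2" unfolding ddef by (simp add: algebra_simps)
      then have m2: "m2 = s * a2 + t * b2"
      proof -
        assume e: "m2 * d = (m1 * b2 - m2 * b1) * a2 + (a1 * m2 - a2 * m1) * b2"
        have "s * a2 + t * b2 = ((m1 * b2 - m2 * b1) * a2 + (a1 * m2 - a2 * m1) * b2) / d"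
          unfolding s_def t_def by (simp add: add_divide_distrib)
        also have "\<dots> = m2" unfolding e[symmetric] using d0 by simp
        finally show ?thesis by simp
      qed
      have "s \<noteq> 1"
      proof
        assume "s = 1"
        then have "b1 * (m2 - a2) - b2 * (m1 - a1) = 0" unfolding m1 m2 by (simp add: algebra_simps)
        then show False using D by simp
      qed
      moreover have "(s, t) \<noteq> (0, 0)" using mnz m1 m2 by auto
      ultimately show ?thesis using lin_c2[OF D False m1 m2 eqs] by blast
    qed
  next
    case True
    obtain c where ac: "a1 = c * b1" "a2 = c * b2"
    proof (cases "b1 = 0")
      case False
      have x: "a1 = a1 / b1 * b1" using False by simp
      have "a1 / b1 * b2 = a1 * b2 / b1" by simp
      also have "\<dots> = a2 * b1 / b1" using True by simp
      also have "\<dots> = a2" using False by simp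
      finally show ?thesis using that[of "a1 / b1"] x by simp
    next
      case b10: True
      then have b2: "b2 \<noteq> 0" using bnz by simp
      have "a1 = 0" using True b10 b2 by simp
      show ?thesis using that[of "a2 / b2"] b2 b10 \<open>a1 = 0\<close> by simp
    qed
    show ?thesis using lin_51[OF D ac eqs] by blast
  qed
  with const show ?thesis by blast
qed

end
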